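(* For every node $p$, if $p$ is active at time $t \geq t_p^e + 2D$, then $SysInfo^{[0, t-D]} \subseteq Changes_p^t$.
   Context: Model: asynchronous message passing; an adversary generates at most one Enter($p$), Leave($p$), Crash($p$) signal per node (forced leaves of crashed nodes may be generated at other active nodes and count toward churn). A node is present at $t$ if entered and not left; $N(t)$ is the number present, $N(t)\geq N_{min}$; $S_0$ is the set present at time 0; active = present and not crashed. A message broadcast by $p$ at time $t$ is received within $D$ time by every $q\neq p$ active throughout $[t,t+D]$ ($D$ unknown, no lower bound, FIFO). Churn: for some $\alpha<1$, at most $\alpha N(t)$ nodes enter or leave during any $[t,t+D]$. Failures: for some $\Delta<1$, at any $t$ at most $\Delta N(t)$ present nodes have crashed. Algorithm (CCReg, joining part): node $p$ keeps $Changes_p$ of $enter(q)$, $join(q)$, $leave(q)$ events (initially $\{enter(q),join(q): q\in S_0\}$ if $p\in S_0$, else empty); $Changes_p^t$ is its value at time $t$, and $Present_p=\{q: enter(q)\in Changes_p, leave(q)\notin Changes_p\}$. On Enter($p$) at time $t_p^e$ ($t_p^e=0$ for $p\in S_0$), $p$ adds $enter(p)$ and broadcasts enter; a receiver adds $enter(p)$ and broadcasts an enter-echo with its Changes set (and value, is_joined flag); receivers merge Changes sets from enter-echoes. After its first enter-echo from a joined node, $p$ sets $join\_bound:=\gamma|Present_p|$ and joins at time $t_p^j$ (adds $join(p)$, broadcasts joined) once it has received $join\_bound$ enter-echoes. Joined messages (sent at $t_q^j$) and leave messages (sent at $t_q^\ell$) cause receivers to add the event and broadcast an echo, whose receivers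 also add it. For a time interval $I$, $SysInfo^I = \{enter(q): t_q^e\in I\}\cup\{join(q): t_q^j\in I\}\cup\{leave(q): t_q^\ell\in I\}$. Assumptions: $\alpha\leq 1-2^{-1/4}$ and $1<((1-\alpha)^3-\Delta(1+\alpha)^3)N_{min}$. *)

theory Defs
  imports Complex_Main
begin

datatype 'n event = Ev_enter 'n | Ev_join 'n | Ev_leave 'n

text \<open>Message contents. An enter-echo carries the node whose enter it echoes,
  the sender's Changes set, its value and its is_joined flag.\<close>
datatype ('n, 'v) msg =
    MEnter 'n
  | MEnterEcho 'n "'n event set" 'v bool
  | MJoined 'n
  | MJoinedEcho 'n
  | MLeave 'n
  | MLeaveEcho 'n

text \<open>A broadcast is identified by (sender, sending time, content).\<close>
type_synonym ('n, 'v) bcast = "'n \<times> real \<times> ('n, 'v) msg"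

record ('n, 'v) run =
  S0 :: "'n set"
  enter_t :: "'n \<Rightarrow> real option"   \<comment> \<open>t_p^e (0 for nodes of S0)\<close>
  leave_t :: "'n \<Rightarrow> real option"
  crash_t :: "'n \<Rightarrow> real option"
  join_t  :: "'n \<Rightarrow> real option"   \<comment> \<open>t_p^j (0 for nodes of S0)\<close>
  bcasts  :: "('n, 'v) bcast set"
  recv    :: "'n \<Rightarrow> ('n, 'v) bcast \<Rightarrow> real option"
  Changes :: "'n \<Rightarrow> real \<Rightarrow> 'n event set"

definition present :: "('n, 'v) run \<Rightarrow> 'n \<Rightarrow> real \<Rightarrow> bool" where
  "present R q t \<longleftrightarrow> (\<exists>e. enter_t R q = Some e \<and> e \<le> t) \<and> \<not> (\<exists>l. leave_t R q = Some l \<and> l \<le> t)"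

definition crashed :: "('n, 'v) run \<Rightarrow> 'n \<Rightarrow> real \<Rightarrow> bool" where
  "crashed R q t \<longleftrightarrow> (\<exists>c. crash_t R q = Some c \<and> c \<le> t)"

definition active :: "('n, 'v) run \<Rightarrow> 'n \<Rightarrow> real \<Rightarrow> bool" where
  "active R q t \<longleftrightarrow> present R q t \<and> \<not> crashed R q t"

definition Nt :: "('n, 'v) run \<Rightarrow> real \<Rightarrow> nat" where
  "Nt R t = card {q. present R q t}"

definition churners :: "('n, 'v) run \<Rightarrow> real \<Rightarrow> real \<Rightarrow> 'n set" where
  "churners R D t = {q. (q \<notin> S0 R \<and> (\<exists>e. enter_t R q = Some e \<and> t \<le> e \<and> e \<le> t + D))
                       \<or> (\<exists>l. leave_t R q = Some l \<and> t \<le> l \<and> l \<le> t + D)}"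

definition SysInfo :: "('n, 'v) run \<Rightarrow> real set \<Rightarrow> 'n event set" where
  "SysInfo R I =
     {Ev_enter q | q. \<exists>e. enter_t R q = Some e \<and> e \<in> I}
   \<union> {Ev_join q | q. \<exists>j. join_t R q = Some j \<and> j \<in> I}
   \<union> {Ev_leave q | q. \<exists>l. leave_t R q = Some l \<and> l \<in> I}"

definition adversary_ok :: "real \<Rightarrow> real \<Rightarrow> nat \<Rightarrow> real \<Rightarrow> ('n, 'v) run \<Rightarrow> bool" where
  "adversary_ok \<alpha> \<Delta> Nmin D R \<longleftrightarrow>
     (\<forall>q. q \<in> S0 R \<longleftrightarrow> enter_t R q = Some 0)
   \<and> (\<forall>q e. enter_t R q = Some e \<longrightarrow> q \<notin> S0 R \<longrightarrow> 0 < e)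
   \<and> (\<forall>q l. leave_t R q = Some l \<longrightarrow> (\<exists>e. enter_t R q = Some e \<and> e \<le> l))
   \<and> (\<forall>q c. crash_t R q = Some c \<longrightarrow> present R q c)
   \<and> (\<forall>t\<ge>0. finite {q. present R q t} \<and> Nmin \<le> Nt R t)
   \<and> (\<forall>t\<ge>0. finite (churners R D t) \<and> real (card (churners R D t)) \<le> \<alpha> * real (Nt R t))
   \<and> (\<forall>t\<ge>0. real (card {q. present R q t \<and> crashed R q t}) \<le> \<Delta> * real (Nt R t))"

definition network_ok :: "real \<Rightarrow> ('n, 'v) run \<Rightarrow> bool" where
  "network_ok D R \<longleftrightarrow>
     (\<forall>p t m q. (p, t, m) \<in> bcasts R \<longrightarrow> q \<noteq> p \<longrightarrow>
        (\<forall>\<tau>. t \<le> \<tau> \<and> \<tau> \<le> t + D \<longrightarrow> active R q \<tau>) \<longrightarrow>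
        (\<exists>s. recv R q (p, t, m) = Some s \<and> t \<le> s \<and> s \<le> t + D))
   \<and> (\<forall>q b s. recv R q b = Some s \<longrightarrow>
        b \<in> bcasts R \<and> q \<noteq> fst b \<and> fst (snd b) \<le> s \<and> active R q s)"

text \<open>The joining part of CCReg, as far as it concerns the Changes sets.\<close>
definition algorithm_ok :: "('n, 'v) run \<Rightarrow> bool" where
  "algorithm_ok R \<longleftrightarrow>
     \<comment> \<open>Changes only grows\<close>
     (\<forall>p s s'. s \<le> s' \<longrightarrow> Changes R p s \<subseteq> Changes R p s')
     \<comment> \<open>initial value for nodes of S0\<close>
   \<and> (\<forall>p \<in> S0 R. {Ev_enter q | q. q \<in> S0 R} \<union> {Ev_join q | q. q \<in> S0 R} \<subseteq> Changes R p 0)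
     \<comment> \<open>S0 nodes are joined at time 0\<close>
   \<and> (\<forall>p \<in> S0 R. join_t R p = Some 0)
     \<comment> \<open>Enter(p): add enter(p) and broadcast enter\<close>
   \<and> (\<forall>p e. enter_t R p = Some e \<longrightarrow> p \<notin> S0 R \<longrightarrow>
        Ev_enter p \<in> Changes R p e \<and> (p, e, MEnter p) \<in> bcasts R)
     \<comment> \<open>joining (at a time when the node is active): add join(p), broadcast joined\<close>
   \<and> (\<forall>p j. join_t R p = Some j \<longrightarrow> p \<notin> S0 R \<longrightarrow>
        (\<exists>e. enter_t R p = Some e \<and> e \<le> j) \<and> active R p j \<and>
        Ev_join p \<in> Changes R p j \<and> (p, j, MJoined p) \<in> bcasts R)
     \<comment> \<open>leave of q: broadcast by q itself, or (forced leave of a crashed q) by another active node\<close>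
   \<and> (\<forall>q l. leave_t R q = Some l \<longrightarrow>
        (\<exists>r. (r, l, MLeave q) \<in> bcasts R \<and> Ev_leave q \<in> Changes R r l \<and>
             ((\<not> crashed R q l \<and> r = q) \<or> (crashed R q l \<and> r \<noteq> q \<and> active R r l))))
     \<comment> \<open>reactions to received messages (receipt at time s by an active node)\<close>
   \<and> (\<forall>q p t x s. recv R q (p, t, MEnter x) = Some s \<longrightarrow>
        Ev_enter x \<in> Changes R q s \<and>
        (\<exists>C v b. (q, s, MEnterEcho x C v b) \<in> bcasts R \<and> Ev_enter x \<in> C \<and>
                 (\<forall>s'<s. Changes R q s' \<subseteq> C) \<and> C \<subseteq> Changes R q s))
   \<and> (\<forall>q p t x C v b s. recv R q (p, t, MEnterEcho x C v b) = Some s \<longrightarrow> C \<subseteq> Changes R q s)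
   \<and> (\<forall>q p t x s. recv R q (p, t, MJoined x) = Some s \<longrightarrow>
        Ev_join x \<in> Changes R q s \<and> (q, s, MJoinedEcho x) \<in> bcasts R)
   \<and> (\<forall>q p t x s. recv R q (p, t, MJoinedEcho x) = Some s \<longrightarrow> Ev_join x \<in> Changes R q s)
   \<and> (\<forall>q p t x s. recv R q (p, t, MLeave x) = Some s \<longrightarrow>
        Ev_leave x \<in> Changes R q s \<and> (q, s, MLeaveEcho x) \<in> bcasts R)
   \<and> (\<forall>q p t x s. recv R q (p, t, MLeaveEcho x) = Some s \<longrightarrow> Ev_leave x \<in> Changes R q s)"

definition ccreg_run :: "real \<Rightarrow> real \<Rightarrow> nat \<Rightarrow> real \<Rightarrow> ('n, 'v) run \<Rightarrow> bool" where
  "ccreg_run \<alpha> \<Delta> Nmin D R \<longleftrightarrow>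
     adversary_ok \<alpha> \<Delta> Nmin D R \<and> network_ok D R \<and> algorithm_ok R"

end

theory Submission
  imports Defs
begin

lemma A0: "algorithm_ok R \<Longrightarrow> (\<forall>p s s'. s \<le> s' \<longrightarrow> Changes R p s \<subseteq> Changes R p s')"
  unfolding algorithm_ok_def by (elim conjE) assumption
lemma A1: "algorithm_ok R \<Longrightarrow> (\<forall>p \<in> S0 R. {Ev_enter q | q. q \<in> S0 R} \<union> {Ev_join q | q. q \<in> S0 R} \<subseteq> Changes R p 0)"
  unfolding algorithm_ok_def by (elim conjE) assumption
lemma A2: "algorithm_ok R \<Longrightarrow> (\<forall>p \<in> S0 R. join_t R p = Some 0)"
  unfolding algorithm_ok_def by (elim conjE) assumption
lemma A3: "algorithm_ok R \<Longrightarrow> (\<forall>p e. enter_t R p = Some e \<longrightarrow> p \<notin> S0 R \<longrightarrow>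
        Ev_enter p \<in> Changes R p e \<and> (p, e, MEnter p) \<in> bcasts R)"
  unfolding algorithm_ok_def by (elim conjE) assumption
lemma A4: "algorithm_ok R \<Longrightarrow> (\<forall>p j. join_t R p = Some j \<longrightarrow> p \<notin> S0 R \<longrightarrow>
        (\<exists>e. enter_t R p = Some e \<and> e \<le> j) \<and> active R p j \<and>
        Ev_join p \<in> Changes R p j \<and> (p, j, MJoined p) \<in> bcasts R)"
  unfolding algorithm_ok_def by (elim conjE) assumption
lemma A5: "algorithm_ok R \<Longrightarrow> (\<forall>q l. leave_t R q = Some l \<longrightarrow>
        (\<exists>r. (r, l, MLeave q) \<in> bcasts R \<and> Ev_leave q \<in> Changes R r l \<and>
             ((\<not> crashed R q l \<and> r = q) \<or> (crashed R q l \<and> r \<noteq> q \<and> active R r l))))"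
  unfolding algorithm_ok_def by (elim conjE) assumption
lemma A6: "algorithm_ok R \<Longrightarrow> (\<forall>q p t x s. recv R q (p, t, MEnter x) = Some s \<longrightarrow>
        Ev_enter x \<in> Changes R q s \<and>
        (\<exists>C v b. (q, s, MEnterEcho x C v b) \<in> bcasts R \<and> Ev_enter x \<in> C \<and>
                 (\<forall>s'<s. Changes R q s' \<subseteq> C) \<and> C \<subseteq> Changes R q s))"
  unfolding algorithm_ok_def by (elim conjE) assumption
lemma A7: "algorithm_ok R \<Longrightarrow> (\<forall>q p t x C v b s. recv R q (p, t, MEnterEcho x C v b) = Some s \<longrightarrow> C \<subseteq> Changes R q s)"
  unfolding algorithm_ok_def by (elim conjE) assumption
lemma A8: "algorithm_ok R \<Longrightarrow> (\<forall>q p t x s. recv R q (p, t, MJoined x) = Some s \<longrightarrow>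
        Ev_join x \<in> Changes R q s \<and> (q, s, MJoinedEcho x) \<in> bcasts R)"
  unfolding algorithm_ok_def by (elim conjE) assumption
lemma A9: "algorithm_ok R \<Longrightarrow> (\<forall>q p t x s. recv R q (p, t, MJoinedEcho x) = Some s \<longrightarrow> Ev_join x \<in> Changes R q s)"
  unfolding algorithm_ok_def by (elim conjE) assumption
lemma A10: "algorithm_ok R \<Longrightarrow> (\<forall>q p t x s. recv R q (p, t, MLeave x) = Some s \<longrightarrow>
        Ev_leave x \<in> Changes R q s \<and> (q, s, MLeaveEcho x) \<in> bcasts R)"
  unfolding algorithm_ok_def by (elim conjE) assumption
lemma A11: "algorithm_ok R \<Longrightarrow> (\<forall>q p t x s. recv R q (p, t, MLeaveEcho x) = Some s \<longrightarrow> Ev_leave x \<in> Changes R q s)"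
  unfolding algorithm_ok_def by (elim conjE) assumption
lemma N0: "network_ok D R \<Longrightarrow> (\<forall>p t m q. (p, t, m) \<in> bcasts R \<longrightarrow> q \<noteq> p \<longrightarrow>
        (\<forall>\<tau>. t \<le> \<tau> \<and> \<tau> \<le> t + D \<longrightarrow> active R q \<tau>) \<longrightarrow>
        (\<exists>s. recv R q (p, t, m) = Some s \<and> t \<le> s \<and> s \<le> t + D))"
  unfolding network_ok_def by (elim conjE) assumption
lemma N1: "network_ok D R \<Longrightarrow> (\<forall>q b s. recv R q b = Some s \<longrightarrow>
        b \<in> bcasts R \<and> q \<noteq> fst b \<and> fst (snd b) \<le> s \<and> active R q s)"
  unfolding network_ok_def by (elim conjE) assumption
lemma V0: "adversary_ok \<alpha> \<Delta> Nmin D R \<Longrightarrow> (\<forall>q. q \<in> S0 R \<longleftrightarrow> enter_t R q = Some 0)"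
  unfolding adversary_ok_def by (elim conjE) assumption
lemma V1: "adversary_ok \<alpha> \<Delta> Nmin D R \<Longrightarrow> (\<forall>q e. enter_t R q = Some e \<longrightarrow> q \<notin> S0 R \<longrightarrow> 0 < e)"
  unfolding adversary_ok_def by (elim conjE) assumption
lemma V2: "adversary_ok \<alpha> \<Delta> Nmin D R \<Longrightarrow> (\<forall>q l. leave_t R q = Some l \<longrightarrow> (\<exists>e. enter_t R q = Some e \<and> e \<le> l))"
  unfolding adversary_ok_def by (elim conjE) assumption
lemma V3: "adversary_ok \<alpha> \<Delta> Nmin D R \<Longrightarrow> (\<forall>q c. crash_t R q = Some c \<longrightarrow> present R q c)"
  unfolding adversary_ok_def by (elim conjE) assumption
lemma V4: "adversary_ok \<alpha> \<Delta> Nmin D R \<Longrightarrow> (\<forall>t\<ge>0. finite {q. present R q t} \<and> Nmin \<le> Nt R t)"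
  unfolding adversary_ok_def by (elim conjE) assumption
lemma V5: "adversary_ok \<alpha> \<Delta> Nmin D R \<Longrightarrow> (\<forall>t\<ge>0. finite (churners R D t) \<and> real (card (churners R D t)) \<le> \<alpha> * real (Nt R t))"
  unfolding adversary_ok_def by (elim conjE) assumption
lemma V6: "adversary_ok \<alpha> \<Delta> Nmin D R \<Longrightarrow> (\<forall>t\<ge>0. real (card {q. present R q t \<and> crashed R q t}) \<le> \<Delta> * real (Nt R t))"
  unfolding adversary_ok_def by (elim conjE) assumption

lemma alg_mono: "algorithm_ok R \<Longrightarrow> s \<le> s' \<Longrightarrow> Changes R p s \<subseteq> Changes R p s'"
  using A0 by blast
lemma alg_init: "algorithm_ok R \<Longrightarrow> p \<in> S0 R \<Longrightarrow> q \<in> S0 R \<Longrightarrow> Ev_enter q \<in> Changes R p 0 \<and> Ev_join q \<in> Changes R p 0"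
proof -
  assume a: "algorithm_ok R" "p \<in> S0 R" "q \<in> S0 R"
  have "{Ev_enter q | q. q \<in> S0 R} \<union> {Ev_join q | q. q \<in> S0 R} \<subseteq> Changes R p 0"
    using A1[OF a(1)] a(2) by blast
  then show ?thesis using a(3) by blast
qed
lemma alg_S0join: "algorithm_ok R \<Longrightarrow> p \<in> S0 R \<Longrightarrow> join_t R p = Some 0"
  using A2 by blast
lemma alg_enter: "algorithm_ok R \<Longrightarrow> enter_t R p = Some e \<Longrightarrow> p \<notin> S0 R \<Longrightarrow>
        Ev_enter p \<in> Changes R p e \<and> (p, e, MEnter p) \<in> bcasts R"
  using A3 by blast
lemma alg_join: "algorithm_ok R \<Longrightarrow> join_t R p = Some j \<Longrightarrow> p \<notin> S0 R \<Longrightarrow>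
        Ev_join p \<in> Changes R p j \<and> (p, j, MJoined p) \<in> bcasts R"
  using A4 by blast
lemma alg_leave: "algorithm_ok R \<Longrightarrow> leave_t R q = Some l \<Longrightarrow>
        (\<exists>r. (r, l, MLeave q) \<in> bcasts R \<and> Ev_leave q \<in> Changes R r l)"
  using A5 by blast
lemma alg_rEnter: "algorithm_ok R \<Longrightarrow> recv R q (p, t, MEnter x) = Some s \<Longrightarrow>
        Ev_enter x \<in> Changes R q s \<and>
        (\<exists>C v b. (q, s, MEnterEcho x C v b) \<in> bcasts R \<and> Ev_enter x \<in> C \<and>
                 (\<forall>s'<s. Changes R q s' \<subseteq> C))"
  using A6 by blast
lemma alg_rEcho: "algorithm_ok R \<Longrightarrow> recv R q (p, t, MEnterEcho x C v b) = Some s \<Longrightarrow> C \<subseteq> Changes R q s"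
  using A7 by blast
lemma alg_rJoined: "algorithm_ok R \<Longrightarrow> recv R q (p, t, MJoined x) = Some s \<Longrightarrow>
        Ev_join x \<in> Changes R q s \<and> (q, s, MJoinedEcho x) \<in> bcasts R"
  using A8 by blast
lemma alg_rJE: "algorithm_ok R \<Longrightarrow> recv R q (p, t, MJoinedEcho x) = Some s \<Longrightarrow> Ev_join x \<in> Changes R q s"
  using A9 by blast
lemma alg_rLeave: "algorithm_ok R \<Longrightarrow> recv R q (p, t, MLeave x) = Some s \<Longrightarrow>
        Ev_leave x \<in> Changes R q s \<and> (q, s, MLeaveEcho x) \<in> bcasts R"
  using A10 by blast
lemma alg_rLE: "algorithm_ok R \<Longrightarrow> recv R q (p, t, MLeaveEcho x) = Some s \<Longrightarrow> Ev_leave x \<in> Changes R q s"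
  using A11 by blast
lemma net_recv: "network_ok D R \<Longrightarrow> (p, t, m) \<in> bcasts R \<Longrightarrow> q \<noteq> p \<Longrightarrow>
        (\<forall>\<tau>. t \<le> \<tau> \<and> \<tau> \<le> t + D \<longrightarrow> active R q \<tau>) \<Longrightarrow>
        (\<exists>s. recv R q (p, t, m) = Some s \<and> t \<le> s \<and> s \<le> t + D)"
  using N0 by blast
lemma adv_S0: "adversary_ok \<alpha> \<Delta> Nmin D R \<Longrightarrow> q \<in> S0 R \<longleftrightarrow> enter_t R q = Some 0"
  using V0 by blast
lemma adv_pos: "adversary_ok \<alpha> \<Delta> Nmin D R \<Longrightarrow> enter_t R q = Some e \<Longrightarrow> q \<notin> S0 R \<Longrightarrow> 0 < e"
  using V1 by blast
lemma adv_leave: "adversary_ok \<alpha> \<Delta> Nmin D R \<Longrightarrow> leave_t R q = Some l \<Longrightarrow> (\<exists>e. enter_t R q = Some e \<and> e \<le> l)"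
  using V2 by blast
lemma adv_N: "adversary_ok \<alpha> \<Delta> Nmin D R \<Longrightarrow> t \<ge> 0 \<Longrightarrow> finite {q. present R q t} \<and> Nmin \<le> Nt R t"
  using V4 by blast
lemma adv_churn: "adversary_ok \<alpha> \<Delta> Nmin D R \<Longrightarrow> t \<ge> 0 \<Longrightarrow> finite (churners R D t) \<and> real (card (churners R D t)) \<le> \<alpha> * real (Nt R t)"
  using V5 by blast
lemma adv_crash: "adversary_ok \<alpha> \<Delta> Nmin D R \<Longrightarrow> t \<ge> 0 \<Longrightarrow> real (card {q. present R q t \<and> crashed R q t}) \<le> \<Delta> * real (Nt R t)"
  using V6 by blast

definition evt_time :: "('n,'v) run \<Rightarrow> 'n event \<Rightarrow> real \<Rightarrow> bool" where
 "evt_time R x \<tau> = (case x of Ev_enter q \<Rightarrow> enter_t R q = Some \<tau> | Ev_join q \<Rightarrow> join_t R q = Some \<tau>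
     | Ev_leave q \<Rightarrow> leave_t R q = Some \<tau>)"

definition s0init :: "('n,'v) run \<Rightarrow> 'n event \<Rightarrow> bool" where
 "s0init R x = (case x of Ev_enter q \<Rightarrow> q \<in> S0 R | Ev_join q \<Rightarrow> q \<in> S0 R | Ev_leave q \<Rightarrow> False)"

lemma SysInfo_iff: "x \<in> SysInfo R I \<longleftrightarrow> (\<exists>\<tau>\<in>I. evt_time R x \<tau>)"
  by (cases x) (auto simp: SysInfo_def evt_time_def)

lemma s0init_lem:
  assumes "adversary_ok \<alpha> \<Delta> Nmin D R" "algorithm_ok R" "s0init R x" "evt_time R x \<tau>"
  shows "\<tau> = 0 \<and> (\<forall>r\<in>S0 R. x \<in> Changes R r 0)"
proof (cases x)
  case (Ev_enter q)
  then have "q \<in> S0 R" "enter_t R q = Some \<tau>" using assms(3,4) unfolding s0init_def evt_time_def by auto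
  moreover have "enter_t R q = Some 0" using adv_S0[OF assms(1), of q] calculation(1) by blast
  ultimately show ?thesis using Ev_enter alg_init[OF assms(2)] by auto
next
  case (Ev_join q)
  then have "q \<in> S0 R" "join_t R q = Some \<tau>" using assms(3,4) unfolding s0init_def evt_time_def by auto
  then show ?thesis using Ev_join alg_init[OF assms(2)] alg_S0join[OF assms(2)] by auto
next
  case (Ev_leave q)
  then show ?thesis using assms unfolding s0init_def by simp
qed

lemma spread:
  assumes A: "algorithm_ok R" and "evt_time R x \<tau>" "\<not> s0init R x"
  shows "\<exists>w M. (w,\<tau>,M) \<in> bcasts R \<and> x \<in> Changes R w \<tau> \<and>
     (\<forall>y s. recv R y (w,\<tau>,M) = Some s \<longrightarrow> x \<in> Changes R y s \<and>
        (\<exists>E. (y,s,E) \<in> bcasts R \<and> (\<forall>z s2. recv R z (y,s,E) = Some s2 \<longrightarrow> x \<in> Changes R z s2)))"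
proof (cases x)
  case (Ev_enter q)
  have b: "(q,\<tau>,MEnter q) \<in> bcasts R" "x \<in> Changes R q \<tau>"
    using assms Ev_enter alg_enter[OF A, of q \<tau>] unfolding s0init_def evt_time_def by auto
  show ?thesis
  proof (rule exI[of _ q], rule exI[of _ "MEnter q"], intro conjI allI impI)
    show "(q,\<tau>,MEnter q) \<in> bcasts R" "x \<in> Changes R q \<tau>" using b by auto
    fix y s assume r: "recv R y (q,\<tau>,MEnter q) = Some s"
    show "x \<in> Changes R y s" using alg_rEnter[OF A r] Ev_enter by blast
    obtain C v bb where C: "(y, s, MEnterEcho q C v bb) \<in> bcasts R" "Ev_enter q \<in> C"
      using alg_rEnter[OF A r] by blast
    show "\<exists>E. (y,s,E) \<in> bcasts R \<and> (\<forall>z s2. recv R z (y,s,E) = Some s2 \<longrightarrow> x \<in> Changes R z s2)"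
    proof (intro exI conjI allI impI)
      show "(y, s, MEnterEcho q C v bb) \<in> bcasts R" by (rule C(1))
      fix z s2 assume "recv R z (y, s, MEnterEcho q C v bb) = Some s2"
      then have "C \<subseteq> Changes R z s2" using alg_rEcho[OF A] by blast
      then show "x \<in> Changes R z s2" using C(2) Ev_enter by blast
    qed
  qed
next
  case (Ev_join q)
  have b: "(q,\<tau>,MJoined q) \<in> bcasts R" "x \<in> Changes R q \<tau>"
    using assms Ev_join alg_join[OF A, of q \<tau>] unfolding s0init_def evt_time_def by auto
  show ?thesis
  proof (rule exI[of _ q], rule exI[of _ "MJoined q"], intro conjI allI impI)
    show "(q,\<tau>,MJoined q) \<in> bcasts R" "x \<in> Changes R q \<tau>" using b by auto
    fix y s assume r: "recv R y (q,\<tau>,MJoined q) = Some s"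
    show "x \<in> Changes R y s" using alg_rJoined[OF A r] Ev_join by blast
    show "\<exists>E. (y,s,E) \<in> bcasts R \<and> (\<forall>z s2. recv R z (y,s,E) = Some s2 \<longrightarrow> x \<in> Changes R z s2)"
    proof (intro exI conjI allI impI)
      show "(y, s, MJoinedEcho q) \<in> bcasts R" using alg_rJoined[OF A r] by blast
      fix z s2 assume "recv R z (y, s, MJoinedEcho q) = Some s2"
      then show "x \<in> Changes R z s2" using alg_rJE[OF A] Ev_join by blast
    qed
  qed
next
  case (Ev_leave q)
  obtain w where b: "(w,\<tau>,MLeave q) \<in> bcasts R" "x \<in> Changes R w \<tau>"
    using assms Ev_leave alg_leave[OF A, of q \<tau>] unfolding evt_time_def by auto
  show ?thesis
  proof (rule exI[of _ w], rule exI[of _ "MLeave q"], intro conjI allI impI)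
    show "(w,\<tau>,MLeave q) \<in> bcasts R" "x \<in> Changes R w \<tau>" using b by auto
    fix y s assume r: "recv R y (w,\<tau>,MLeave q) = Some s"
    show "x \<in> Changes R y s" using alg_rLeave[OF A r] Ev_leave by blast
    show "\<exists>E. (y,s,E) \<in> bcasts R \<and> (\<forall>z s2. recv R z (y,s,E) = Some s2 \<longrightarrow> x \<in> Changes R z s2)"
    proof (intro exI conjI allI impI)
      show "(y, s, MLeaveEcho q) \<in> bcasts R" using alg_rLeave[OF A r] by blast
      fix z s2 assume "recv R z (y, s, MLeaveEcho q) = Some s2"
      then show "x \<in> Changes R z s2" using alg_rLE[OF A] Ev_leave by blast
    qed
  qed
qed

lemma active_between:
  assumes "active R q t" "enter_t R q = Some e0" "e0 \<le> \<tau>" "\<tau> \<le> t"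
  shows "active R q \<tau>"
proof -
  have "present R q \<tau>" using assms unfolding active_def present_def by fastforce
  moreover have "\<not> crashed R q \<tau>" using assms unfolding active_def crashed_def by fastforce
  ultimately show ?thesis unfolding active_def by blast
qed

lemma mono_ch: "algorithm_ok R \<Longrightarrow> s \<le> s' \<Longrightarrow> Changes R p s \<subseteq> Changes R p s'"
  unfolding algorithm_ok_def by (elim conjE, blast)

lemma growth:
  assumes adv: "adversary_ok \<alpha> \<Delta> Nmin D R" and D: "0 \<le> D" and t: "0 \<le> t"
  shows "real (Nt R (t+D)) \<le> (1+\<alpha>) * real (Nt R t)"
proof -
  have sub: "{q. present R q (t+D)} \<subseteq> {q. present R q t} \<union> churners R D t"
  proof
    fix q assume "q \<in> {q. present R q (t+D)}"
    then obtain e where e: "enter_t R q = Some e" "e \<le> t + D" and nl: "\<not> (\<exists>l. leave_t R q = Some l \<and> l \<le> t+D)"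
      unfolding present_def by auto
    show "q \<in> {q. present R q t} \<union> churners R D t"
    proof (cases "e \<le> t")
      case True
      have "\<not> (\<exists>l. leave_t R q = Some l \<and> l \<le> t)"
      proof
        assume "\<exists>l. leave_t R q = Some l \<and> l \<le> t"
        then obtain l where "leave_t R q = Some l" "l \<le> t" by blast
        moreover have "l \<le> t + D" using \<open>l \<le> t\<close> D by linarith
        ultimately show False using nl by blast
      qed
      then have "present R q t" using e True unfolding present_def by blast
      then show ?thesis by blast
    next
      case False
      then have "q \<notin> S0 R" using adv_S0[OF adv, of q] e t by auto
      then have "q \<in> churners R D t" using e False unfolding churners_def by auto
      then show ?thesis by blast
    qed
  qed
  have f1: "finite {q. present R q t}" using adv_N[OF adv t] by blast
  have f2: "finite (churners R D t)" and c: "real (card (churners R D t)) \<le> \<alpha> * real (Nt R t)"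
    using adv_churn[OF adv t] by auto
  have "card {q. present R q (t+D)} \<le> card ({q. present R q t} \<union> churners R D t)"
    using sub f1 f2 by (intro card_mono) auto
  also have "\<dots> \<le> card {q. present R q t} + card (churners R D t)" by (rule card_Un_le)
  finally have "real (Nt R (t+D)) \<le> real (Nt R t) + real (card (churners R D t))"
    unfolding Nt_def by linarith
  then show ?thesis using c by (simp add: algebra_simps)
qed

lemma arith_main:
  fixes \<alpha> \<Delta> n0 n1 n2 n3 x y c g :: real
  assumes "0 \<le> \<alpha>" "0 \<le> \<Delta>" "\<Delta> < 1" "(1+\<alpha>)^4 < 2" "\<Delta> * (1+\<alpha>)^4 < 1" "1 \<le> n0"
    "0 \<le> x" "0 \<le> y" "x + y \<le> \<alpha> * (n0 + n1 + n2 + n3)"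
    "n1 \<le> (1+\<alpha>) * n0" "n2 \<le> (1+\<alpha>) * n1" "n3 \<le> (1+\<alpha>) * n2"
    "c \<le> \<Delta> * (n0 - x + y)" "g = n0 - x - c"
  shows "0 < g"
proof -
  have a2: "n2 \<le> (1+\<alpha>) * ((1+\<alpha>) * n0)" using assms(10,11,1)
    by (meson add_nonneg_nonneg mult_left_mono order_trans zero_le_one)
  have a3: "n3 \<le> (1+\<alpha>) * ((1+\<alpha>) * ((1+\<alpha>) * n0))" using assms(12,1) a2
    by (meson add_nonneg_nonneg mult_left_mono order_trans zero_le_one)
  have "n0 + n1 + n2 + n3 \<le> n0 + (1+\<alpha>) * n0 + (1+\<alpha>) * ((1+\<alpha>) * n0) + (1+\<alpha>) * ((1+\<alpha>) * ((1+\<alpha>) * n0))"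
    using a2 a3 assms(10) by linarith
  then have "\<alpha> * (n0 + n1 + n2 + n3) \<le> \<alpha> * (n0 + (1+\<alpha>) * n0 + (1+\<alpha>) * ((1+\<alpha>) * n0) + (1+\<alpha>) * ((1+\<alpha>) * ((1+\<alpha>) * n0)))"
    using assms(1) by (intro mult_left_mono) auto
  also have "\<dots> = n0 * ((1+\<alpha>)^4 - 1)" by (simp add: algebra_simps power_numeral_reduce)
  finally have xy: "x + y \<le> n0 * ((1+\<alpha>)^4 - 1)" using assms(9) by linarith
  define K where "K = (1+\<alpha>)^4"
  have xy': "y \<le> n0 * (K - 1) - x" using xy K_def by simp
  have K2: "K < 2" "\<Delta> * K < 1" using assms(4,5) K_def by auto
  have "g \<ge> (1-\<Delta>) * (n0 - x) - \<Delta> * y" using assms(13,14) by (simp add: algebra_simps)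
  moreover have "\<Delta> * y \<le> \<Delta> * (n0 * (K - 1) - x)" using xy' assms(2) by (intro mult_left_mono) auto
  ultimately have g1: "g \<ge> n0 * (1 - \<Delta> * K) - (1 - 2*\<Delta>) * x" by (simp add: algebra_simps)
  have p1: "n0 * (1 - \<Delta> * K) > 0" using K2 assms(6) by simp
  show ?thesis
  proof (cases "\<Delta> \<ge> 1/2")
    case True
    then have "(1 - 2*\<Delta>) * x \<le> 0" using assms(7) by (simp add: mult_nonpos_nonneg)
    then show ?thesis using g1 p1 by linarith
  next
    case False
    have "x \<le> n0 * (K - 1)" using xy' assms(8) by linarith
    then have "(1 - 2*\<Delta>) * x \<le> (1 - 2*\<Delta>) * (n0 * (K - 1))" using False by (intro mult_left_mono) auto
    moreover have "n0 * (1 - \<Delta> * K) - (1 - 2*\<Delta>) * (n0 * (K - 1)) = n0 * ((2 - K) * (1 - \<Delta>))"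
      by (simp add: algebra_simps)
    moreover have "n0 * ((2 - K) * (1 - \<Delta>)) > 0" using K2 assms(3,6) by simp
    ultimately show ?thesis using g1 by linarith
  qed
qed

lemma four_int:
  fixes t0 v D :: real
  assumes "0 < D" "t0 \<le> v" "v \<le> t0 + 4*D"
  shows "\<exists>i\<in>{0,1,2,3::nat}. t0 + real i * D \<le> v \<and> v \<le> t0 + real i * D + D"
proof -
  consider "v \<le> t0 + D" | "t0 + D \<le> v \<and> v \<le> t0 + 2*D" | "t0 + 2*D \<le> v \<and> v \<le> t0 + 3*D" | "t0 + 3*D \<le> v"
    by linarith
  then show ?thesis
  proof cases
    case 1 then show ?thesis using assms by (intro bexI[of _ 0]) auto
  next
    case 2 then show ?thesis using assms by (intro bexI[of _ 1]) auto
  next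
    case 3 then show ?thesis using assms by (intro bexI[of _ 2]) auto
  next
    case 4 then show ?thesis using assms by (intro bexI[of _ 3]) auto
  qed
qed

lemma survivor:
  assumes adv: "adversary_ok \<alpha> \<Delta> Nmin D R" and D: "0 < D" and al: "0 \<le> \<alpha>" "0 \<le> \<Delta>" "\<Delta> < 1"
    "(1+\<alpha>)^4 < 2" "\<Delta>*(1+\<alpha>)^4 < 1" and Nm: "1 \<le> Nmin"
    and t0: "0 \<le> t0" "t0 \<le> T" "T \<le> t0 + 4*D"
  shows "\<exists>r. present R r t0 \<and> (\<forall>l. leave_t R r = Some l \<longrightarrow> T < l) \<and> \<not> crashed R r T"
proof (rule ccontr)
  assume nex: "\<not> ?thesis"
  define P where "P t = {q. present R q t}" for t
  define A0 where "A0 = P t0"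
  define Lv where "Lv = {q\<in>A0. \<exists>l. leave_t R q = Some l \<and> l \<le> T}"
  define Cr where "Cr = {q \<in> A0 - Lv. crashed R q T}"
  define En where "En = P T - A0"
  define Ch where "Ch i = churners R D (t0 + real i * D)" for i::nat
  define N where "N i = real (Nt R (t0 + real i * D))" for i :: nat
  have T0: "0 \<le> T" using t0 by linarith
  have fA: "finite A0" unfolding A0_def P_def using adv_N[OF adv t0(1)] by blast
  have fPT: "finite (P T)" unfolding P_def using adv_N[OF adv T0] by blast
  have LvA: "Lv \<subseteq> A0" unfolding Lv_def by blast
  have fLv: "finite Lv" using finite_subset[OF LvA fA] .
  have fEn: "finite En" unfolding En_def using fPT by (rule finite_Diff)
  have pres_T: "present R q T" if "q \<in> A0 - Lv" for q
  proof -
    from that have "present R q t0" unfolding A0_def P_def by blast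
    then obtain e where e: "enter_t R q = Some e" "e \<le> t0" unfolding present_def by blast
    from that have "\<not> (\<exists>l. leave_t R q = Some l \<and> l \<le> T)" unfolding Lv_def by blast
    moreover have "e \<le> T" using e(2) t0 by linarith
    ultimately show ?thesis unfolding present_def using e(1) by blast
  qed
  have CrEq: "A0 - Lv = Cr"
  proof
    show "A0 - Lv \<subseteq> Cr"
    proof
      fix q assume q: "q \<in> A0 - Lv"
      have "present R q t0" using q unfolding A0_def P_def by blast
      moreover have "\<forall>l. leave_t R q = Some l \<longrightarrow> T < l" using q unfolding Lv_def by auto
      ultimately have "crashed R q T" using nex by blast
      then show "q \<in> Cr" using q unfolding Cr_def by blast
    qed
  qed (auto simp: Cr_def)
  have subC: "Cr \<subseteq> {q. present R q T \<and> crashed R q T}" using pres_T unfolding Cr_def by blast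
  have finC: "finite {q. present R q T \<and> crashed R q T}" by (rule finite_subset[OF _ fPT]) (auto simp: P_def)
  have "card Cr \<le> card {q. present R q T \<and> crashed R q T}" by (rule card_mono[OF finC subC])
  then have cCr: "real (card Cr) \<le> \<Delta> * real (Nt R T)" using adv_crash[OF adv T0] by linarith
  have PT_sub: "P T \<subseteq> (A0 - Lv) \<union> En"
  proof
    fix q assume q: "q \<in> P T"
    show "q \<in> (A0 - Lv) \<union> En"
    proof (cases "q \<in> A0")
      case True
      have "q \<notin> Lv" using q unfolding P_def present_def Lv_def by auto
      then show ?thesis using True by blast
    qed (use q En_def in blast)
  qed
  have fU: "finite ((A0 - Lv) \<union> En)" using fA fEn by simp
  have "card (P T) \<le> card ((A0 - Lv) \<union> En)" using card_mono[OF fU PT_sub] .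
  also have "\<dots> \<le> card (A0 - Lv) + card En" by (rule card_Un_le)
  finally have NT: "real (Nt R T) \<le> real (card (A0 - Lv)) + real (card En)" unfolding Nt_def P_def by linarith
  have cdiff: "card (A0 - Lv) = card A0 - card Lv" using card_Diff_subset[OF fLv LvA] .
  have cLvA: "card Lv \<le> card A0" using LvA fA by (rule card_mono[rotated])
  have LE_sub: "Lv \<union> En \<subseteq> Ch 0 \<union> Ch 1 \<union> Ch 2 \<union> Ch 3"
  proof
    fix q assume q: "q \<in> Lv \<union> En"
    have "\<exists>i\<in>{0,1,2,3::nat}. q \<in> Ch i"
    proof (cases "q \<in> Lv")
      case True
      then obtain l where l: "leave_t R q = Some l" "l \<le> T" and pq: "present R q t0"
        unfolding Lv_def A0_def P_def by blast
      have "t0 < l"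
      proof (rule ccontr)
        assume "\<not> t0 < l"
        then have "l \<le> t0" by simp
        with pq l(1) show False unfolding present_def by blast
      qed
      then have lr: "t0 \<le> l" "l \<le> t0 + 4*D" using l(2) t0 by linarith+
      obtain i where i: "i\<in>{0,1,2,3::nat}" "t0 + real i * D \<le> l" "l \<le> t0 + real i * D + D"
        using four_int[OF D lr] by blast
      have "q \<in> churners R D (t0 + real i * D)" unfolding churners_def using l(1) i(2,3) by blast
      then have "q \<in> Ch i" unfolding Ch_def .
      then show ?thesis using i(1) by blast
    next
      case False
      then have qE: "q \<in> En" using q by blast
      then have pT: "present R q T" and npt0: "\<not> present R q t0" unfolding En_def P_def A0_def by auto
      from pT obtain e where e: "enter_t R q = Some e" "e \<le> T" and nl: "\<not> (\<exists>l. leave_t R q = Some l \<and> l \<le> T)"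
        unfolding present_def by blast
      have et: "t0 < e"
      proof (rule ccontr)
        assume "\<not> t0 < e"
        then have "e \<le> t0" by simp
        moreover have "\<not> (\<exists>l. leave_t R q = Some l \<and> l \<le> t0)"
        proof
          assume "\<exists>l. leave_t R q = Some l \<and> l \<le> t0"
          then obtain l where "leave_t R q = Some l" "l \<le> t0" by blast
          moreover have "l \<le> T" using \<open>l \<le> t0\<close> t0 by linarith
          ultimately show False using nl by blast
        qed
        ultimately have "present R q t0" unfolding present_def using e(1) by blast
        then show False using npt0 by blast
      qed
      have nS: "q \<notin> S0 R"
      proof
        assume "q \<in> S0 R"
        then have "enter_t R q = Some 0" using adv_S0[OF adv, of q] by blast
        then show False using e(1) et t0 by simp
      qed
      have er: "t0 \<le> e" "e \<le> t0 + 4*D" using e(2) et t0 by linarith+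
      obtain i where i: "i\<in>{0,1,2,3::nat}" "t0 + real i * D \<le> e" "e \<le> t0 + real i * D + D"
        using four_int[OF D er] by blast
      have "q \<in> churners R D (t0 + real i * D)" unfolding churners_def using nS e(1) i(2,3) by blast
      then have "q \<in> Ch i" unfolding Ch_def .
      then show ?thesis using i(1) by blast
    qed
    then show "q \<in> Ch 0 \<union> Ch 1 \<union> Ch 2 \<union> Ch 3" by blast
  qed
  have tpos: "0 \<le> t0 + real i * D" for i :: nat using t0 D by simp
  have fCh: "finite (Ch i)" for i using conjunct1[OF adv_churn[OF adv tpos[of i]]] unfolding Ch_def .
  have cCh: "real (card (Ch i)) \<le> \<alpha> * N i" for i using adv_churn[OF adv tpos[of i]] unfolding Ch_def N_def by blast
  have disj: "Lv \<inter> En = {}" unfolding En_def using LvA by blast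
  have "card Lv + card En = card (Lv \<union> En)" using card_Un_disjoint[OF fLv fEn disj] by simp
  also have "\<dots> \<le> card (Ch 0 \<union> Ch 1 \<union> Ch 2 \<union> Ch 3)"
    using card_mono[OF _ LE_sub] fCh by simp
  also have "\<dots> \<le> card (Ch 0) + card (Ch 1) + card (Ch 2) + card (Ch 3)"
  proof -
    have "card (Ch 0 \<union> Ch 1 \<union> Ch 2 \<union> Ch 3) \<le> card (Ch 0 \<union> Ch 1 \<union> Ch 2) + card (Ch 3)" by (rule card_Un_le)
    moreover have "card (Ch 0 \<union> Ch 1 \<union> Ch 2) \<le> card (Ch 0 \<union> Ch 1) + card (Ch 2)" by (rule card_Un_le)
    moreover have "card (Ch 0 \<union> Ch 1) \<le> card (Ch 0) + card (Ch 1)" by (rule card_Un_le)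
    ultimately show ?thesis by linarith
  qed
  finally have "real (card Lv + card En) \<le> real (card (Ch 0) + card (Ch 1) + card (Ch 2) + card (Ch 3))"
    by linarith
  also have "\<dots> \<le> \<alpha> * N 0 + \<alpha> * N 1 + \<alpha> * N 2 + \<alpha> * N 3" using cCh[of 0] cCh[of 1] cCh[of 2] cCh[of 3] by simp
  finally have xy: "real (card Lv) + real (card En) \<le> \<alpha> * (N 0 + N 1 + N 2 + N 3)" by (simp add: algebra_simps)
  have gr: "N (Suc i) \<le> (1+\<alpha>) * N i" for i
  proof -
    have eq: "t0 + real (Suc i) * D = (t0 + real i * D) + D" by (simp add: algebra_simps)
    have G: "real (Nt R ((t0 + real i * D) + D)) \<le> (1+\<alpha>) * real (Nt R (t0 + real i * D))"
      by (rule growth[OF adv _ tpos[of i]]) (use D in linarith)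
    show ?thesis unfolding N_def eq using G .
  qed
  have N0: "N 0 = real (card A0)" unfolding N_def A0_def P_def Nt_def by simp
  have N0ge: "1 \<le> N 0" using adv_N[OF adv t0(1)] Nm unfolding N_def by simp
  have g1: "N 1 \<le> (1+\<alpha>) * N 0" using gr[of 0] by simp
  have g2: "N 2 \<le> (1+\<alpha>) * N 1" using gr[of 1] by (simp add: numeral_2_eq_2)
  have g3: "N 3 \<le> (1+\<alpha>) * N 2" using gr[of 2] by (simp add: numeral_3_eq_3 numeral_2_eq_2)
  have cc: "real (card Cr) \<le> \<Delta> * (N 0 - real (card Lv) + real (card En))"
  proof -
    have "real (Nt R T) \<le> N 0 - real (card Lv) + real (card En)" using NT cdiff cLvA N0 by (simp add: of_nat_diff)
    then show ?thesis using cCr al(2) by (meson mult_left_mono order_trans)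
  qed
  have "0 < N 0 - real (card Lv) - real (card Cr)"
    by (rule arith_main[OF al(1,2,3,4,5) N0ge of_nat_0_le_iff of_nat_0_le_iff xy g1 g2 g3 cc refl])
  moreover have "card Cr = card A0 - card Lv" using CrEq cdiff by simp
  ultimately show False using cLvA N0 by (simp add: of_nat_diff)
qed

lemma params:
  fixes \<alpha> \<Delta> :: real and Nmin :: nat
  assumes a0: "0 \<le> \<alpha>" and a1: "\<alpha> \<le> 1 - 2 powr (-1/4)" and d0: "0 \<le> \<Delta>"
    and h: "1 < ((1 - \<alpha>)^3 - \<Delta> * (1 + \<alpha>)^3) * real Nmin"
  shows "(1+\<alpha>)^4 < 2" "\<Delta> * (1+\<alpha>)^4 < 1" "1 \<le> Nmin"
proof -
  define u :: real where "u = 2 powr (-1/4)"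
  have u0: "0 < u" unfolding u_def by simp
  have "u ^ 4 = u powr (real 4)" using u0 by (simp add: powr_realpow)
  also have "\<dots> = 2 powr (-1)" unfolding u_def by (simp add: powr_powr)
  also have "\<dots> = 1/2" by (simp add: powr_minus)
  finally have u4: "u^4 = 1/2" .
  have u84: "0.84 < u"
  proof (rule ccontr)
    assume "\<not> 0.84 < u"
    then have "u \<le> 0.84" by simp
    then have "u^4 \<le> 0.84^4" using u0 by (intro power_mono) auto
    then show False using u4 by (simp add: power_numeral_reduce)
  qed
  have "1 + \<alpha> \<le> 1.16" using a1 u84 unfolding u_def by simp
  then have "(1+\<alpha>)^4 \<le> 1.16^4" using a0 by (intro power_mono) auto
  then show "(1+\<alpha>)^4 < 2" by (simp add: power_numeral_reduce)
  have al1: "\<alpha> \<le> 1" using a1 u0 unfolding u_def by linarith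
  have Npos: "0 < real Nmin" using h by (cases "Nmin = 0") auto
  then show "1 \<le> Nmin" by simp
  have "0 < (1 - \<alpha>)^3 - \<Delta> * (1 + \<alpha>)^3"
    using h Npos by (metis linorder_not_le mult_nonpos_nonneg not_less_iff_gr_or_eq of_nat_0_le_iff zero_less_one order_less_trans)
  then have lt: "\<Delta> * (1 + \<alpha>)^3 < (1 - \<alpha>)^3" by simp
  show "\<Delta> * (1+\<alpha>)^4 < 1"
  proof -
    have "\<Delta> * (1 + \<alpha>)^3 * (1+\<alpha>) < (1 - \<alpha>)^3 * (1+\<alpha>)" using lt a0 by (intro mult_strict_right_mono) auto
    also have "\<dots> = (1-\<alpha>)^2 * (1 - \<alpha>^2)" by (simp add: power_numeral_reduce algebra_simps)
    also have "\<dots> \<le> 1 * 1"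
    proof (rule mult_mono)
      show "(1-\<alpha>)^2 \<le> 1" using a0 al1 by (simp add: power_le_one)
      show "1 - \<alpha>^2 \<le> 1" by simp
      show "0 \<le> 1 - \<alpha>^2" using a0 al1 by (simp add: power_le_one)
    qed simp
    finally show ?thesis by (simp add: power_numeral_reduce mult.assoc)
  qed
qed

lemma direct:
  assumes N: "network_ok D R" and A: "algorithm_ok R" and D: "0 \<le> D"
    and ev: "evt_time R x \<tau>" "\<not> s0init R x"
    and act: "\<forall>\<sigma>. \<tau> \<le> \<sigma> \<and> \<sigma> \<le> \<tau> + D \<longrightarrow> active R z \<sigma>"
  shows "x \<in> Changes R z (\<tau> + D)"
proof -
  obtain w M where wM: "(w,\<tau>,M) \<in> bcasts R" "x \<in> Changes R w \<tau>"
     "\<forall>y s. recv R y (w,\<tau>,M) = Some s \<longrightarrow> x \<in> Changes R y s"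
    using spread[OF A ev] by blast
  show ?thesis
  proof (cases "z = w")
    case True
    then show ?thesis using wM(2) alg_mono[OF A, of \<tau> "\<tau> + D" w] D by auto
  next
    case False
    obtain s where s: "recv R z (w,\<tau>,M) = Some s" "s \<le> \<tau> + D"
      using net_recv[OF N wM(1) False act] by blast
    then show ?thesis using wM(3) alg_mono[OF A s(2), of z] by blast
  qed
qed

lemma relay:
  assumes N: "network_ok D R" and A: "algorithm_ok R" and D: "0 \<le> D"
    and ev: "evt_time R x \<tau>" "\<not> s0init R x"
    and rp: "r \<noteq> p" and K: "\<forall>s'<s. Changes R r s' \<subseteq> Changes R p t" and es: "e \<le> s"
    and pact: "\<forall>\<sigma>. e \<le> \<sigma> \<and> \<sigma> \<le> t \<longrightarrow> active R p \<sigma>"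
    and te: "\<tau> < e" "e + 2*D \<le> t"
    and ract: "\<forall>\<sigma>. \<tau> \<le> \<sigma> \<and> \<sigma> \<le> \<tau> + D \<longrightarrow> active R r \<sigma>"
  shows "x \<in> Changes R p t"
proof -
  obtain w M where wM: "(w,\<tau>,M) \<in> bcasts R" "x \<in> Changes R w \<tau>"
     "\<forall>y s. recv R y (w,\<tau>,M) = Some s \<longrightarrow> x \<in> Changes R y s \<and>
        (\<exists>E. (y,s,E) \<in> bcasts R \<and> (\<forall>z s2. recv R z (y,s,E) = Some s2 \<longrightarrow> x \<in> Changes R z s2))"
    using spread[OF A ev] by blast
  show ?thesis
  proof (cases "r = w")
    case True
    then show ?thesis using wM(2) K te(1) es by force
  next
    case False
    obtain sr where sr: "recv R r (w,\<tau>,M) = Some sr" "\<tau> \<le> sr" "sr \<le> \<tau> + D"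
      using net_recv[OF N wM(1) False ract] by blast
    have xr: "x \<in> Changes R r sr" using wM(3) sr(1) by blast
    obtain E where E: "(r,sr,E) \<in> bcasts R" "\<forall>z s2. recv R z (r,sr,E) = Some s2 \<longrightarrow> x \<in> Changes R z s2"
      using wM(3) sr(1) by blast
    show ?thesis
    proof (cases "sr < s")
      case True
      then show ?thesis using K xr by blast
    next
      case False
      have pa: "\<forall>\<sigma>. sr \<le> \<sigma> \<and> \<sigma> \<le> sr + D \<longrightarrow> active R p \<sigma>"
      proof (intro allI impI)
        fix \<sigma> assume "sr \<le> \<sigma> \<and> \<sigma> \<le> sr + D"
        then have "e \<le> \<sigma> \<and> \<sigma> \<le> t" using False es sr(3) te by linarith
        then show "active R p \<sigma>" using pact by blast
      qed
      obtain s2 where s2: "recv R p (r,sr,E) = Some s2" "s2 \<le> sr + D"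
        using net_recv[OF N E(1) rp[symmetric] pa] by blast
      have "x \<in> Changes R p s2" using E(2) s2(1) by blast
      moreover have "s2 \<le> t" using s2(2) sr(3) te by linarith
      ultimately show ?thesis using alg_mono[OF A, of s2 t p] by blast
    qed
  qed
qed

lemma active_window:
  assumes "present R r t0" "\<forall>l. leave_t R r = Some l \<longrightarrow> T < l" "\<not> crashed R r T" "t0 \<le> \<sigma>" "\<sigma> \<le> T"
  shows "active R r \<sigma>"
proof -
  obtain er where er: "enter_t R r = Some er" "er \<le> t0" using assms(1) unfolding present_def by blast
  have "present R r \<sigma>" unfolding present_def
  proof
    show "\<exists>e. enter_t R r = Some e \<and> e \<le> \<sigma>" using er assms(4) by auto
    show "\<not> (\<exists>l. leave_t R r = Some l \<and> l \<le> \<sigma>)"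
    proof
      assume "\<exists>l. leave_t R r = Some l \<and> l \<le> \<sigma>"
      then obtain l where "leave_t R r = Some l" "l \<le> \<sigma>" by blast
      then show False using assms(2,5) by force
    qed
  qed
  moreover have "\<not> crashed R r \<sigma>"
  proof
    assume "crashed R r \<sigma>"
    then obtain c where "crash_t R r = Some c" "c \<le> \<sigma>" unfolding crashed_def by blast
    then have "crashed R r T" unfolding crashed_def using assms(5) by force
    then show False using assms(3) by blast
  qed
  ultimately show ?thesis unfolding active_def by blast
qed

definition Phi :: "('n,'v) run \<Rightarrow> real \<Rightarrow> real \<Rightarrow> bool" where
  "Phi R D t = (\<forall>p e. enter_t R p = Some e \<longrightarrow> active R p t \<longrightarrow> e + 2 * D \<le> t \<longrightarrow>
           SysInfo R {0..t - D} \<subseteq> Changes R p t)"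

lemma step:
  assumes adv: "adversary_ok \<alpha> \<Delta> Nmin D R" and N: "network_ok D R" and A: "algorithm_ok R"
    and D: "0 < D" and al: "0 \<le> \<alpha>" "0 \<le> \<Delta>" "\<Delta> < 1"
    "(1+\<alpha>)^4 < 2" "\<Delta>*(1+\<alpha>)^4 < 1" and Nm: "1 \<le> Nmin"
    and IH: "\<forall>t'. t' < t - D \<longrightarrow> Phi R D t'"
  shows "Phi R D t"
  unfolding Phi_def
proof (intro allI impI subsetI)
  fix p e x
  assume pe: "enter_t R p = Some e" and pat: "active R p t" and et: "e + 2 * D \<le> t"
    and xS: "x \<in> SysInfo R {0..t - D}"
  obtain \<tau> where tau: "0 \<le> \<tau>" "\<tau> \<le> t - D" and ev: "evt_time R x \<tau>"
    using xS unfolding SysInfo_iff by auto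
  have pact: "\<forall>\<sigma>. e \<le> \<sigma> \<and> \<sigma> \<le> t \<longrightarrow> active R p \<sigma>"
    using active_between[OF pat pe] by blast
  have D0: "0 \<le> D" using D by simp
  have dir: "x \<in> Changes R p t" if "\<not> s0init R x" "e \<le> \<tau>"
  proof -
    have "\<forall>\<sigma>. \<tau> \<le> \<sigma> \<and> \<sigma> \<le> \<tau> + D \<longrightarrow> active R p \<sigma>" using pact that(2) tau by auto
    then have "x \<in> Changes R p (\<tau> + D)" using direct[OF N A D0 ev that(1)] by blast
    then show ?thesis using alg_mono[OF A, of "\<tau>+D" t p] tau by auto
  qed
  show "x \<in> Changes R p t"
  proof (cases "p \<in> S0 R")
    case True
    then have e0: "e = 0" using adv_S0[OF adv, of p] pe by simp
    show ?thesis
    proof (cases "s0init R x")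
      case True
      then have "x \<in> Changes R p 0" using s0init_lem[OF adv A True ev] \<open>p \<in> S0 R\<close> by blast
      then show ?thesis using alg_mono[OF A, of 0 t p] et e0 D by auto
    next
      case False
      then show ?thesis using dir e0 tau by simp
    qed
  next
    case pS: False
    have epos: "0 < e" using adv_pos[OF adv pe pS] .
    show ?thesis
    proof (cases "\<not> s0init R x \<and> e \<le> \<tau>")
      case True
      then show ?thesis using dir by blast
    next
      case notdir: False
      define t0 where "t0 = max 0 (e - 5*D/2)"
      have t0s: "0 \<le> t0" "t0 \<le> e + D" "e + D \<le> t0 + 4*D" "t0 < e" unfolding t0_def using D epos by auto
      obtain r where r: "present R r t0" "\<forall>l. leave_t R r = Some l \<longrightarrow> e + D < l" "\<not> crashed R r (e + D)"
        using survivor[OF adv D al Nm t0s(1,2,3)] by blast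
      have ract: "\<forall>\<sigma>. t0 \<le> \<sigma> \<and> \<sigma> \<le> e + D \<longrightarrow> active R r \<sigma>"
        using active_window[OF r] by blast
      have rp: "r \<noteq> p"
      proof
        assume "r = p"
        then show False using r(1) pe t0s(4) unfolding present_def by auto
      qed
      have pb: "(p, e, MEnter p) \<in> bcasts R" using alg_enter[OF A pe pS] by blast
      obtain s where s: "recv R r (p,e,MEnter p) = Some s" "e \<le> s" "s \<le> e + D"
        using net_recv[OF N pb rp] ract t0s(4) by force
      obtain C v b where C: "(r, s, MEnterEcho p C v b) \<in> bcasts R" "\<forall>s'<s. Changes R r s' \<subseteq> C"
        using alg_rEnter[OF A s(1)] by blast
      have pa2: "\<forall>\<sigma>. s \<le> \<sigma> \<and> \<sigma> \<le> s + D \<longrightarrow> active R p \<sigma>"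
        using pact s et by auto
      obtain s2 where s2: "recv R p (r, s, MEnterEcho p C v b) = Some s2" "s2 \<le> s + D"
        using net_recv[OF N C(1) rp[symmetric] pa2] by blast
      have "C \<subseteq> Changes R p t"
        using alg_rEcho[OF A s2(1)] alg_mono[OF A, of s2 t p] s2(2) s(3) et by auto
      then have K: "\<forall>s'<s. Changes R r s' \<subseteq> Changes R p t" using C(2) by blast
      obtain er where er: "enter_t R r = Some er" "er \<le> t0" using r(1) unfolding present_def by blast
      show ?thesis
      proof (cases "5*D/2 \<le> e \<and> \<tau> \<le> e - 3*D/2")
        case True
        define t' where "t' = e - D/2"
        have "t' < t - D" unfolding t'_def using et D by linarith
        then have ph: "Phi R D t'" using IH by blast
        have t0v: "t0 = e - 5*D/2" unfolding t0_def using True by auto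
        have "active R r t'" using ract t0v D unfolding t'_def by auto
        moreover have "er + 2 * D \<le> t'" using er t0v unfolding t'_def by linarith
        ultimately have "SysInfo R {0..t' - D} \<subseteq> Changes R r t'" using ph er(1) unfolding Phi_def by blast
        moreover have "x \<in> SysInfo R {0..t' - D}" unfolding SysInfo_iff t'_def using tau(1) True ev by auto
        moreover have "t' < s" unfolding t'_def using s(2) D by linarith
        ultimately show ?thesis using K by blast
      next
        case notIH: False
        show ?thesis
        proof (cases "s0init R x")
          case True
          have tz: "\<tau> = 0" using s0init_lem[OF adv A True ev] by blast
          then have "e < 5*D/2" using notIH D epos by linarith
          then have "t0 = 0" unfolding t0_def by auto
          then have "er = 0" using er adv_pos[OF adv er(1)] adv_S0[OF adv, of r] by force
          then have "r \<in> S0 R" using adv_S0[OF adv, of r] er(1) by simp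
          then have "x \<in> Changes R r 0" using s0init_lem[OF adv A True ev] by blast
          moreover have "(0::real) < s" using s(2) epos by linarith
          ultimately show ?thesis using K by blast
        next
          case False
          have tle: "\<tau> < e" using notdir False by auto
          have "t0 \<le> \<tau>" unfolding t0_def using notIH tau(1) D by auto
          then have ra: "\<forall>\<sigma>. \<tau> \<le> \<sigma> \<and> \<sigma> \<le> \<tau> + D \<longrightarrow> active R r \<sigma>" using ract tle by auto
          show ?thesis by (rule relay[OF N A D0 ev False rp K s(2) pact tle et ra])
        qed
      qed
    qed
  qed
qed

lemma all_Phi:
  assumes adv: "adversary_ok \<alpha> \<Delta> Nmin D R" and N: "network_ok D R" and A: "algorithm_ok R"
    and D: "0 < D" and al: "0 \<le> \<alpha>" "0 \<le> \<Delta>" "\<Delta> < 1"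
    "(1+\<alpha>)^4 < 2" "\<Delta>*(1+\<alpha>)^4 < 1" and Nm: "1 \<le> Nmin"
  shows "\<forall>t. t < real n * D \<longrightarrow> Phi R D t"
proof (induction n)
  case 0
  show ?case unfolding Phi_def
  proof (intro allI impI)
    fix t p e assume "t < real 0 * D" "enter_t R p = Some e" "e + 2 * D \<le> t"
    moreover have "0 \<le> e" using adv_pos[OF adv, of p e] adv_S0[OF adv, of p] calculation(2)
      by (cases "p \<in> S0 R") auto
    ultimately show "SysInfo R {0..t - D} \<subseteq> Changes R p t" using D by simp
  qed
next
  case (Suc n)
  show ?case
  proof (intro allI impI)
    fix t assume "t < real (Suc n) * D"
    then have "\<forall>t'. t' < t - D \<longrightarrow> Phi R D t'" using Suc.IH by (auto simp: algebra_simps)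
    then show "Phi R D t" by (rule step[OF adv N A D al Nm])
  qed
qed

theorem lemma5:
  fixes \<alpha> \<Delta> D :: real and Nmin :: nat and R :: "('n, 'v) run"
  assumes "0 < D"
    and "0 \<le> \<alpha>" and "\<alpha> \<le> 1 - 2 powr (-1/4)"
    and "0 \<le> \<Delta>" and "\<Delta> < 1"
    and "1 < ((1 - \<alpha>)^3 - \<Delta> * (1 + \<alpha>)^3) * real Nmin"
    and "ccreg_run \<alpha> \<Delta> Nmin D R"
  shows "\<forall>p e t. enter_t R p = Some e \<longrightarrow> active R p t \<longrightarrow> e + 2 * D \<le> t \<longrightarrow>
           SysInfo R {0..t - D} \<subseteq> Changes R p t"
proof (intro allI)
  fix p e t
  have adv: "adversary_ok \<alpha> \<Delta> Nmin D R" and N: "network_ok D R" and A: "algorithm_ok R"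
    using assms(7) unfolding ccreg_run_def by auto
  note pr = params[OF assms(2,3,4,6)]
  obtain n :: nat where "t / D < real n" using reals_Archimedean2 by blast
  then have "t < real n * D" using assms(1) by (simp add: divide_less_eq)
  then have "Phi R D t" using all_Phi[OF adv N A assms(1,2,4,5) pr, of n] by blast
  then show "enter_t R p = Some e \<longrightarrow> active R p t \<longrightarrow> e + 2 * D \<le> t \<longrightarrow>
           SysInfo R {0..t - D} \<subseteq> Changes R p t" unfolding Phi_def by blast
qed

end
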